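(* Let $n\ge 2$ and let $i,j$ be integers with $1\le i\le n-1$ and $0\le j\le n-1$. For every graph $G^*$ on $n$ vertices with at most one loop per vertex, with adjacency eigenvalues $\lambda_1\ge\lambda_2\ge\cdots\ge\lambda_n$, \[\lambda_{i+1}(G^* )-\lambda_{n-j}(G^* )\le \frac{n}{2}\sqrt{\frac{i+j+1}{i(j+1)}}.\] Consequently, $s_{i,j}\le \frac12\sqrt{\frac{i+j+1}{i(j+1)}}$.
   Context: A graph with at most one loop per vertex on vertex set $\{1,\dots,n\}$ is identified with its adjacency matrix $A=(a_{uv})$, a symmetric $n\times n$ $(0,1)$-matrix where $a_{uv}=1$ iff $uv$ is an edge and $a_{uu}=1$ iff there is a loop at $u$. Its eigenvalues (of $A$) are listed as $\lambda_1\ge\cdots\ge\lambda_n$. For a simple graph $G$ on $n$ vertices, ${\rm spread}_{i,j}(G)=\lambda_{i+1}(G)-\lambda_{n-j}(G)$; ${\rm spread}_{i,j}(n)$ is the maximum of ${\rm spread}_{i,j}(G)$ over all simple graphs $G$ on $n$ vertices, and $s_{i,j}=\lim_{n\to\infty}{\rm spread}_{i,j}(n)/n$ (this limit is known to exist). *)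

theory Defs
  imports "Jordan_Normal_Form.Char_Poly"
begin

text \<open>Adjacency matrix of a graph on vertex set of size n with at most one loop
  per vertex: a symmetric n x n (0,1)-matrix (diagonal entries = loops).\<close>
definition loop_graph_adj :: "nat \<Rightarrow> real mat \<Rightarrow> bool" where
  "loop_graph_adj n A \<longleftrightarrow> A \<in> carrier_mat n n \<and> transpose_mat A = A \<and>
     (\<forall>u<n. \<forall>v<n. A $$ (u,v) = 0 \<or> A $$ (u,v) = 1)"

definition simple_graph_adj :: "nat \<Rightarrow> real mat \<Rightarrow> bool" where
  "simple_graph_adj n A \<longleftrightarrow> loop_graph_adj n A \<and> (\<forall>u<n. A $$ (u,u) = 0)"

text \<open>The eigenvalues of A (roots of the characteristic polynomial, with
  multiplicity), listed in non-increasing order; entry k-1 is lambda_k.\<close>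
definition eigs :: "real mat \<Rightarrow> real list" where
  "eigs A = (THE xs. length xs = dim_row A \<and> sorted_wrt (\<ge>) xs \<and>
       char_poly A = prod_list (map (\<lambda>x. [:- x, 1:]) xs))"

definition eig :: "real mat \<Rightarrow> nat \<Rightarrow> real" where
  "eig A k = eigs A ! (k - 1)"

definition spread_graph :: "nat \<Rightarrow> nat \<Rightarrow> nat \<Rightarrow> real mat \<Rightarrow> real" where
  "spread_graph i j n A = eig A (i + 1) - eig A (n - j)"

definition spread_n :: "nat \<Rightarrow> nat \<Rightarrow> nat \<Rightarrow> real" where
  "spread_n i j n = Max {spread_graph i j n A | A. simple_graph_adj n A}"

end

theory Submission imports Defs "Jordan_Normal_Form.Schur_Decomposition" "HOL-Computational_Algebra.Fundamental_Theorem_Algebra" begin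

lemma conj_real_vec[simp]: "conjugate (v :: real vec) = v"
  by (intro eq_vecI) auto

lemma real_sprod_self_ge0: "(v :: real vec) \<bullet> v \<ge> 0"
  unfolding scalar_prod_def by (intro sum_nonneg) auto

lemma orth_complete:
  fixes x :: "real vec"
  assumes x: "x \<in> carrier_vec n" and x0: "x \<noteq> 0\<^sub>v n"
  shows "\<exists>U \<in> carrier_mat n n. transpose_mat U * U = 1\<^sub>m n \<and> U * transpose_mat U = 1\<^sub>m n
     \<and> col U 0 = (1 / sqrt (x \<bullet> x)) \<cdot>\<^sub>v x \<and> 0 < n"
proof -
  interpret cof_vec_space n "TYPE(real)" .
  define b where "b = basis_completion x"
  define ws where "ws = gram_schmidt n b"
  from basis_completion[OF x x0, folded b_def]
  have dist_b: "distinct b" 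
    and indep: "\<not> lin_dep (set b)" and b: "set b \<subseteq> carrier_vec n" and hdb: "hd b = x" 
    and len_b: "length b = n" by auto
  have n: "0 < n" using x x0 by (cases n) auto
  from hdb len_b n obtain vs where bv: "b = x # vs" by (cases b, auto)
  from gram_schmidt_result[OF b dist_b indep refl, folded ws_def]
  have ws: "set ws \<subseteq> carrier_vec n" "corthogonal ws" "length ws = n" 
    by (auto simp: len_b)
  from gram_schmidt_hd[OF x, of vs, folded bv] have hdws: "hd ws = x" unfolding ws_def .
  have ws0: "ws ! 0 = x" using hdws n ws(3) by (cases ws) auto
  define c where "c = (\<lambda>w::real vec. 1 / sqrt (w \<bullet> w))"
  define us where "us = map (\<lambda>w. c w \<cdot>\<^sub>v w) ws"
  define U where "U = mat_of_cols n us"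
  have lus: "length us = n" using ws by (simp add: us_def)
  have wsi: "i < n \<Longrightarrow> ws ! i \<in> carrier_vec n" for i using ws by auto
  have usi: "i < n \<Longrightarrow> us ! i = c (ws ! i) \<cdot>\<^sub>v ws ! i" for i using ws by (simp add: us_def)
  have usc: "i < n \<Longrightarrow> us ! i \<in> carrier_vec n" for i using usi wsi by auto
  have U: "U \<in> carrier_mat n n" unfolding U_def using lus by auto
  have colU: "i < n \<Longrightarrow> col U i = us ! i" for i
    unfolding U_def using lus usc by (intro col_mat_of_cols) auto
  have orth: "i < n \<Longrightarrow> j < n \<Longrightarrow> (ws ! i \<bullet> ws ! j = 0) = (i \<noteq> j)" for i j
    using corthogonalD[OF ws(2), of i j] ws(3) by (simp add: scalar_prod_def)
  have pos: "i < n \<Longrightarrow> ws ! i \<bullet> ws ! i > 0" for i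
    using orth[of i i] real_sprod_self_ge0[of "ws ! i"] by linarith
  have tt: "transpose_mat U * U = 1\<^sub>m n"
  proof (rule eq_matI)
    fix i j assume i: "i < dim_row (1\<^sub>m n)" and j: "j < dim_col (1\<^sub>m n)"
    hence i: "i < n" and j: "j < n" by auto
    have "(transpose_mat U * U) $$ (i, j) = col U i \<bullet> col U j"
      using U i j by simp
    also have "\<dots> = c (ws ! i) * c (ws ! j) * (ws ! i \<bullet> ws ! j)"
      using colU[OF i] colU[OF j] usi[OF i] usi[OF j] wsi[OF i] wsi[OF j] by simp
    also have "\<dots> = 1\<^sub>m n $$ (i, j)"
    proof (cases "i = j")
      case True
      have p: "ws ! j \<bullet> ws ! j > 0" using pos j by auto
      have "sqrt (ws ! j \<bullet> ws ! j) * sqrt (ws ! j \<bullet> ws ! j) = ws ! j \<bullet> ws ! j"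
        using p by simp
      then show ?thesis using True i j p unfolding c_def by (simp add: field_simps)
    next
      case False
      then show ?thesis using orth[OF i j] i j by simp
    qed
    finally show "(transpose_mat U * U) $$ (i, j) = 1\<^sub>m n $$ (i, j)" .
  qed (use U in auto)
  have tt2: "U * transpose_mat U = 1\<^sub>m n"
    using mat_mult_left_right_inverse[OF _ U tt] U by auto
  have "col U 0 = (1 / sqrt (x \<bullet> x)) \<cdot>\<^sub>v x"
    using colU[OF n] usi[OF n] ws0 unfolding c_def by simp
  thus ?thesis using U tt tt2 n by blast
qed

lemma real_eigenvalue_exists:
  fixes A :: "real mat"
  assumes A: "A \<in> carrier_mat n n" and sym: "transpose_mat A = A" and n: "0 < n"
  shows "\<exists>e. eigenvalue A e"
proof -
  define C where "C = map_mat complex_of_real A"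
  have C: "C \<in> carrier_mat n n" using A by (simp add: C_def)
  have cpC: "char_poly C = map_poly of_real (char_poly A)"
    unfolding C_def by (rule of_real_hom.char_poly_hom[OF A])
  have "degree (char_poly C) = n" using degree_monic_char_poly[OF C] by simp
  hence "\<not> constant (poly (char_poly C))" using n constant_degree[of "char_poly C"] by simp
  then obtain z where z: "poly (char_poly C) z = 0" using fundamental_theorem_of_algebra by blast
  hence "eigenvalue C z" using eigenvalue_root_char_poly[OF C] by simp
  then obtain v where ev: "eigenvector C v z" unfolding eigenvalue_def by blast
  hence v: "v \<in> carrier_vec n" and v0: "v \<noteq> 0\<^sub>v n" and Cv: "C *\<^sub>v v = z \<cdot>\<^sub>v v"
    unfolding eigenvector_def using C by auto
  have Cuw: "u < n \<Longrightarrow> w < n \<Longrightarrow> C $$ (u, w) = of_real (A $$ (u, w))" for u w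
    using A unfolding C_def by auto
  have symA: "u < n \<Longrightarrow> w < n \<Longrightarrow> A $$ (u, w) = A $$ (w, u)" for u w
    using arg_cong[OF sym, of "\<lambda>M. M $$ (u, w)"] A by auto
  have Cvu: "u < n \<Longrightarrow> (C *\<^sub>v v) $ u = (\<Sum>w<n. C $$ (u, w) * v $ w)" for u
    using C v by (auto simp: scalar_prod_def atLeast0LessThan)
  define N where "N = (\<Sum>u<n. cnj (v $ u) * v $ u)"
  define s where "s = (\<Sum>u<n. cnj (v $ u) * (C *\<^sub>v v) $ u)"
  have s1: "s = z * N" unfolding s_def N_def using Cv v
    by (auto simp: sum_distrib_left intro!: sum.cong)
  have s2: "s = (\<Sum>u<n. \<Sum>w<n. cnj (v $ u) * of_real (A $$ (u, w)) * v $ w)"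
    unfolding s_def by (auto simp: Cvu Cuw sum_distrib_left mult.assoc intro!: sum.cong)
  have "cnj s = (\<Sum>u<n. \<Sum>w<n. v $ u * of_real (A $$ (u, w)) * cnj (v $ w))"
    unfolding s2 by (simp add: cnj_sum)
  also have "\<dots> = (\<Sum>w<n. \<Sum>u<n. v $ u * of_real (A $$ (u, w)) * cnj (v $ w))"
    by (rule sum.swap)
  also have "\<dots> = s" unfolding s2
    by (auto simp: symA mult.commute mult.left_commute intro!: sum.cong)
  finally have cs: "cnj s = s" .
  have Nr: "N = of_real (\<Sum>u<n. (cmod (v $ u))^2)"
  proof -
    have eq: "cnj a * a = complex_of_real ((cmod a)^2)" for a
      by (metis complex_norm_square mult.commute)
    show ?thesis unfolding N_def of_real_sum eq ..
  qed
  have "(\<Sum>u<n. (cmod (v $ u))^2) \<noteq> 0"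
  proof
    assume "(\<Sum>u<n. (cmod (v $ u))^2) = 0"
    hence "\<forall>u\<in>{..<n}. (cmod (v $ u))^2 = 0" by (subst (asm) sum_nonneg_eq_0_iff) auto
    hence "v = 0\<^sub>v n" using v by (intro eq_vecI) auto
    thus False using v0 by simp
  qed
  hence N0: "N \<noteq> 0" using Nr by (metis of_real_eq_0_iff)
  have "cnj z * cnj N = z * N" using cs s1 by simp
  moreover have "cnj N = N" using Nr by (metis complex_cnj_complex_of_real)
  ultimately have cz: "cnj z = z" using N0 by simp
  have "Im z = 0" using arg_cong[OF cz, of Im] by simp
  hence zr: "z = of_real (Re z)" by (simp add: complex_eq_iff)
  have "poly (map_poly of_real (char_poly A)) (of_real (Re z) :: complex) = of_real (poly (char_poly A) (Re z))"
    by (induction "char_poly A") (auto simp: map_poly_pCons)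
  hence "poly (char_poly A) (Re z) = 0" using z zr cpC by simp
  thus ?thesis using eigenvalue_root_char_poly[OF A] by blast
qed

definition mtr :: "real mat \<Rightarrow> real" where
  "mtr M = (\<Sum>i<dim_row M. M $$ (i, i))"

lemma mtr_comm:
  assumes P: "P \<in> carrier_mat n k" and Q: "Q \<in> carrier_mat k n"
  shows "mtr (P * Q) = mtr (Q * P)"
proof -
  have "mtr (P * Q) = (\<Sum>i<n. \<Sum>j<k. P $$ (i, j) * Q $$ (j, i))"
    unfolding mtr_def using P Q by (auto simp: scalar_prod_def atLeast0LessThan intro!: sum.cong)
  also have "\<dots> = (\<Sum>j<k. \<Sum>i<n. Q $$ (j, i) * P $$ (i, j))"
    by (subst sum.swap) (simp add: mult.commute)
  also have "\<dots> = mtr (Q * P)"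
    unfolding mtr_def using P Q by (auto simp: scalar_prod_def atLeast0LessThan intro!: sum.cong)
  finally show ?thesis .
qed

lemma mtr_fro:
  assumes N: "N \<in> carrier_mat n n"
  shows "mtr (transpose_mat N * N) = (\<Sum>u<n. \<Sum>v<n. (N $$ (u, v))^2)"
proof -
  have "mtr (transpose_mat N * N) = (\<Sum>i<n. \<Sum>j<n. N $$ (j, i) * N $$ (j, i))"
    unfolding mtr_def using N by (auto simp: scalar_prod_def atLeast0LessThan intro!: sum.cong)
  also have "\<dots> = (\<Sum>u<n. \<Sum>v<n. (N $$ (u, v))^2)"
    by (subst sum.swap) (simp add: power2_eq_square)
  finally show ?thesis .
qed

lemma fro_orth:
  fixes M U :: "real mat"
  assumes M: "M \<in> carrier_mat n n" and U: "U \<in> carrier_mat n n"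
    and UU: "U * transpose_mat U = 1\<^sub>m n"
  shows "(\<Sum>u<n. \<Sum>v<n. ((transpose_mat U * (M * U)) $$ (u, v))^2) = (\<Sum>u<n. \<Sum>v<n. (M $$ (u, v))^2)"
proof -
  let ?N = "transpose_mat U * (M * U)"
  have Ut: "transpose_mat U \<in> carrier_mat n n" using U by auto
  have Mt: "transpose_mat M \<in> carrier_mat n n" using M by auto
  have N: "?N \<in> carrier_mat n n" using U M by auto
  have tN: "transpose_mat ?N = transpose_mat U * (transpose_mat M * U)"
  proof -
    have "transpose_mat ?N = transpose_mat (M * U) * transpose_mat (transpose_mat U)"
      using transpose_mult[OF Ut mult_carrier_mat[OF M U]] by simp
    also have "\<dots> = (transpose_mat U * transpose_mat M) * U"
      using U M by (simp add: transpose_mult[of M n n U n])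
    also have "\<dots> = transpose_mat U * (transpose_mat M * U)"
      using U M Ut Mt by (simp add: assoc_mult_mat[of _ n n _ n _ n])
    finally show ?thesis .
  qed
  have "transpose_mat ?N * ?N = transpose_mat U * (transpose_mat M * U) * (transpose_mat U * (M * U))"
    using tN by simp
  also have "\<dots> = transpose_mat U * (transpose_mat M * (U * transpose_mat U) * (M * U))"
    using U M Ut Mt by (simp add: assoc_mult_mat[of _ n n _ n _ n])
  also have "\<dots> = transpose_mat U * ((transpose_mat M * M) * U)"
    using U M Ut Mt UU by (simp add: assoc_mult_mat[of _ n n _ n _ n])
  finally have e: "transpose_mat ?N * ?N = transpose_mat U * ((transpose_mat M * M) * U)" .
  have "mtr (transpose_mat ?N * ?N) = mtr (((transpose_mat M * M) * U) * transpose_mat U)"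
    unfolding e using U M Ut Mt by (intro mtr_comm[of _ n n]) auto
  also have "\<dots> = mtr (transpose_mat M * M)"
    using U M Ut Mt UU by (simp add: assoc_mult_mat[of _ n n _ n _ n])
  finally show ?thesis using mtr_fro[OF N] mtr_fro[OF M] by simp
qed

lemma quad_split:
  "(\<Sum>u<Suc m. \<Sum>v<Suc m. f u v) = f 0 0 + (\<Sum>v<m. f 0 (Suc v)) + (\<Sum>u<m. f (Suc u) 0)
     + (\<Sum>u<m. \<Sum>v<m. f (Suc u) (Suc v))"
  by (simp only: sum.lessThan_Suc_shift sum.distrib) (simp add: algebra_simps)

lemma qform:
  fixes M :: "real mat"
  assumes "M \<in> carrier_mat n n" "x \<in> carrier_vec n"
  shows "x \<bullet> (M *\<^sub>v x) = (\<Sum>u<n. \<Sum>v<n. x $ u * M $$ (u, v) * x $ v)"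
  using assms by (simp add: scalar_prod_def sum_distrib_left mult.assoc atLeast0LessThan)

lemma char_poly_0: "A \<in> carrier_mat 0 0 \<Longrightarrow> char_poly (A :: real mat) = 1"
  using degree_monic_char_poly[of A 0] by (metis coeff_0_degree_minus_1 degree_0_id one_poly_eq_simps(1) pCons_one)

lemma spectral:
  fixes A :: "real mat"
  assumes "A \<in> carrier_mat n n" and "transpose_mat A = A"
  shows "\<exists>es. length es = n \<and> char_poly A = (\<Prod>e\<leftarrow>es. [:- e, 1:]) \<and>
     (\<Sum>u<n. \<Sum>v<n. (A $$ (u, v))^2) = (\<Sum>e\<leftarrow>es. e^2) \<and>
     (\<forall>\<mu>. (\<forall>e\<in>set es. e \<le> \<mu>) \<longrightarrow> (\<forall>x\<in>carrier_vec n. x \<bullet> (A *\<^sub>v x) \<le> \<mu> * (x \<bullet> x)))"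
  using assms
proof (induction n arbitrary: A)
  case 0
  then show ?case using char_poly_0[of A] by (intro exI[of _ "[]"]) (auto simp: scalar_prod_def)
next
  case (Suc m)
  define n where "n = Suc m"
  have A: "A \<in> carrier_mat n n" and sym: "transpose_mat A = A" using Suc n_def by auto
  obtain e where "eigenvalue A e" using real_eigenvalue_exists[OF A sym] n_def by auto
  then obtain x where "eigenvector A x e" unfolding eigenvalue_def by blast
  hence x: "x \<in> carrier_vec n" and x0: "x \<noteq> 0\<^sub>v n" and Ax: "A *\<^sub>v x = e \<cdot>\<^sub>v x"
    unfolding eigenvector_def using A by auto
  obtain U where U: "U \<in> carrier_mat n n" and UtU: "transpose_mat U * U = 1\<^sub>m n"
    and UUt: "U * transpose_mat U = 1\<^sub>m n" and cU: "col U 0 = (1 / sqrt (x \<bullet> x)) \<cdot>\<^sub>v x"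
    using orth_complete[OF x x0] by blast
  have Ut: "transpose_mat U \<in> carrier_mat n n" using U by auto
  define S where "S = transpose_mat U * (A * U)"
  have S: "S \<in> carrier_mat n n" using U A unfolding S_def by auto
  have symS: "transpose_mat S = S"
  proof -
    have "transpose_mat S = transpose_mat (A * U) * transpose_mat (transpose_mat U)"
      unfolding S_def using transpose_mult[OF Ut mult_carrier_mat[OF A U]] by simp
    also have "\<dots> = (transpose_mat U * A) * U"
      using U A sym by (simp add: transpose_mult[of A n n U n])
    also have "\<dots> = S" unfolding S_def using U A Ut by (simp add: assoc_mult_mat[of _ n n _ n _ n])
    finally show ?thesis .
  qed
  define y where "y = col U 0"
  have y: "y \<in> carrier_vec n" using U unfolding y_def by auto
  have Ay: "A *\<^sub>v y = e \<cdot>\<^sub>v y"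
    unfolding y_def cU using A x Ax by (simp add: mult_mat_vec[OF A x] smult_smult_assoc mult.commute)
  have "col S 0 = transpose_mat U *\<^sub>v (A *\<^sub>v y)"
    unfolding S_def y_def using col_mult2[OF Ut mult_carrier_mat[OF A U], of 0] col_mult2[OF A U, of 0]
    by (simp add: n_def)
  also have "\<dots> = e \<cdot>\<^sub>v (transpose_mat U *\<^sub>v y)" unfolding Ay using mult_mat_vec[OF Ut y] by simp
  also have "transpose_mat U *\<^sub>v y = col (transpose_mat U * U) 0"
    unfolding y_def using col_mult2[OF Ut U, of 0] by (simp add: n_def)
  also have "\<dots> = unit_vec n 0" unfolding UtU by (simp add: n_def)
  finally have colS: "col S 0 = e \<cdot>\<^sub>v unit_vec n 0" .
  have S0: "u < n \<Longrightarrow> S $$ (u, 0) = (if u = 0 then e else 0)" for u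
    using arg_cong[OF colS, of "\<lambda>v. v $ u"] S by (auto simp: n_def)
  have S0': "u < n \<Longrightarrow> S $$ (0, u) = (if u = 0 then e else 0)" for u
    using S0[of u] arg_cong[OF symS, of "\<lambda>M. M $$ (u, 0)"] S by (auto simp: n_def)
  define B where "B = mat m m (\<lambda>(u, v). S $$ (Suc u, Suc v))"
  have B: "B \<in> carrier_mat m m" unfolding B_def by auto
  have Ssym: "u < n \<Longrightarrow> v < n \<Longrightarrow> S $$ (u, v) = S $$ (v, u)" for u v
    using arg_cong[OF symS, of "\<lambda>M. M $$ (v, u)"] S by auto
  have symB: "transpose_mat B = B"
    using S Ssym unfolding B_def
    by (intro eq_matI) (auto simp: n_def)
  have Sblock: "S = four_block_mat (mat 1 1 (\<lambda>_. e)) (0\<^sub>m 1 m) (0\<^sub>m m 1) B"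
    using S S0 S0' unfolding B_def by (intro eq_matI) (auto simp: n_def)
  have "char_poly A = char_poly S"
  proof (rule char_poly_similar, rule similar_matI[where n=n and P=U and Q="transpose_mat U"])
    show "A = U * S * transpose_mat U"
    proof -
      have "U * S * transpose_mat U = (U * transpose_mat U) * A * (U * transpose_mat U)"
        unfolding S_def using U A Ut by (simp add: assoc_mult_mat[of _ n n _ n _ n])
      thus ?thesis using UUt A by simp
    qed
  qed (use A S U Ut UtU UUt in auto)
  also have "\<dots> = [:- e, 1:] * char_poly B"
    unfolding Sblock
    by (subst char_poly_four_block_zeros_col[OF _ _ B]) (auto simp: char_poly_defs det_def sign_def)
  finally have cpA: "char_poly A = [:- e, 1:] * char_poly B" .
  from Suc.IH[OF B symB] obtain es where es: "length es = m" "char_poly B = (\<Prod>e\<leftarrow>es. [:- e, 1:])"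
    "(\<Sum>u<m. \<Sum>v<m. (B $$ (u, v))^2) = (\<Sum>e\<leftarrow>es. e^2)"
    "\<And>\<mu>. (\<forall>e\<in>set es. e \<le> \<mu>) \<Longrightarrow> (\<forall>x\<in>carrier_vec m. x \<bullet> (B *\<^sub>v x) \<le> \<mu> * (x \<bullet> x))"
    by blast
  have Bi: "u < m \<Longrightarrow> v < m \<Longrightarrow> B $$ (u, v) = S $$ (Suc u, Suc v)" for u v
    unfolding B_def by auto
  have sq: "(\<Sum>u<n. \<Sum>v<n. (A $$ (u, v))^2) = e^2 + (\<Sum>e\<leftarrow>es. e^2)"
  proof -
    have "(\<Sum>u<n. \<Sum>v<n. (A $$ (u, v))^2) = (\<Sum>u<n. \<Sum>v<n. (S $$ (u, v))^2)"
      unfolding S_def using fro_orth[OF A U UUt] by simp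
    also have "\<dots> = e^2 + (\<Sum>u<m. \<Sum>v<m. (B $$ (u, v))^2)"
      unfolding n_def quad_split using S0 S0' by (simp add: Bi n_def)
    finally show ?thesis using es(3) by simp
  qed
  show ?case
  proof (intro exI[of _ "e # es"] conjI allI impI ballI)
    show "length (e # es) = Suc m" using es by simp
    show "char_poly A = (\<Prod>e\<leftarrow>e # es. [:- e, 1:])" using cpA es by simp
    show "(\<Sum>u<Suc m. \<Sum>v<Suc m. (A $$ (u, v))^2) = (\<Sum>e\<leftarrow>e # es. e^2)"
      using sq by (simp add: n_def)
    fix \<mu> :: real and z :: "real vec" assume mu: "\<forall>e\<in>set (e # es). e \<le> \<mu>" and z: "z \<in> carrier_vec (Suc m)"
    have z: "z \<in> carrier_vec n" using z n_def by simp
    define w where "w = transpose_mat U *\<^sub>v z"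
    have w: "w \<in> carrier_vec n" using Ut z unfolding w_def by auto
    have zw: "z = U *\<^sub>v w" unfolding w_def using U Ut z UUt
      by (simp add: assoc_mult_mat_vec[of _ n n _ n, symmetric])
    have "z \<bullet> (A *\<^sub>v z) = w \<bullet> (S *\<^sub>v w)"
    proof -
      have "S *\<^sub>v w = transpose_mat U *\<^sub>v (A *\<^sub>v z)"
        unfolding S_def zw using assoc_mult_mat_vec[OF Ut mult_carrier_mat[OF A U] w]
          assoc_mult_mat_vec[OF A U w] by simp
      hence "w \<bullet> (S *\<^sub>v w) = (transpose_mat (transpose_mat U) *\<^sub>v w) \<bullet> (A *\<^sub>v z)"
        using transpose_vec_mult_scalar[OF Ut, of "A *\<^sub>v z" w] A z w by simp
      thus ?thesis using zw by simp
    qed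
    moreover have "z \<bullet> z = w \<bullet> w"
    proof -
      have "w \<bullet> w = (transpose_mat (transpose_mat U) *\<^sub>v w) \<bullet> z"
        unfolding w_def using transpose_vec_mult_scalar[OF Ut z, of "transpose_mat U *\<^sub>v z"] Ut z
        by (simp add: w_def)
      thus ?thesis using zw by simp
    qed
    moreover
    define w' where "w' = vec m (\<lambda>u. w $ Suc u)"
    have w': "w' \<in> carrier_vec m" unfolding w'_def by simp
    have "w \<bullet> (S *\<^sub>v w) = e * (w $ 0)^2 + w' \<bullet> (B *\<^sub>v w')"
      unfolding qform[OF S w] qform[OF B w'] n_def quad_split
      using S0 S0' by (simp add: Bi w'_def n_def power2_eq_square)
    moreover have "w \<bullet> w = (w $ 0)^2 + w' \<bullet> w'"
      using w unfolding w'_def n_def by (simp add: scalar_prod_def atLeast0LessThan sum.lessThan_Suc_shift power2_eq_square del: sum.lessThan_Suc)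
    moreover have "w' \<bullet> (B *\<^sub>v w') \<le> \<mu> * (w' \<bullet> w')" using es(4)[of \<mu>] mu w' by auto
    moreover have "e * (w $ 0)^2 \<le> \<mu> * (w $ 0)^2" using mu by (simp add: mult_right_mono)
    ultimately show "z \<bullet> (A *\<^sub>v z) \<le> \<mu> * (z \<bullet> z)" by (simp add: distrib_left)
  qed
qed

lemma order_linear_factors: "Polynomial.order (a::real) (\<Prod>y\<leftarrow>ys. [:- y, 1:]) = count (mset ys) a"
proof (induction ys)
  case Nil
  then show ?case by (simp add: order_0I)
next
  case (Cons y ys)
  have nz: "(\<Prod>y\<leftarrow>ys. [:- y, 1:]) \<noteq> (0 :: real poly)"
  proof
    assume "(\<Prod>y\<leftarrow>ys. [:- y, 1:]) = (0 :: real poly)"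
    then obtain y where "[:- y, 1:] = (0 :: real poly)" by (auto simp: prod_list_zero_iff)
    thus False by simp
  qed
  have o1: "Polynomial.order a [:- y, 1:] = (if a = y then 1 else 0)"
    using order_power_n_n[of a 1] order_0I[of "[:- y, 1:]" a] by auto
  have "Polynomial.order a ([:- y, 1:] * (\<Prod>y\<leftarrow>ys. [:- y, 1:])) = Polynomial.order a [:- y, 1:] + Polynomial.order a (\<Prod>y\<leftarrow>ys. [:- y, 1:])"
  proof (rule order_mult)
    have "[:- y, 1:] \<noteq> (0 :: real poly)" by simp
    thus "[:- y, 1:] * (\<Prod>y\<leftarrow>ys. [:- y, 1:]) \<noteq> 0" using nz by (metis mult_eq_0_iff)
  qed
  then show ?case using Cons o1 by simp
qed

lemma linear_factors_unique:
  fixes xs ys :: "real list"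
  assumes "sorted_wrt (\<ge>) xs" "sorted_wrt (\<ge>) ys"
    and "(\<Prod>y\<leftarrow>xs. [:- y, 1:]) = (\<Prod>y\<leftarrow>ys. [:- y, 1:])"
  shows "xs = ys"
proof -
  have m: "mset xs = mset ys"
    by (rule multiset_eqI) (metis assms(3) order_linear_factors)
  have "sorted (rev xs)" "sorted (rev ys)" using assms(1,2) by (simp_all add: sorted_wrt_rev)
  hence "rev xs = rev ys"
    using m by (metis mset_rev properties_for_sort)
  thus ?thesis by simp
qed

lemma list_prod_perm: "mset xs = mset ys \<Longrightarrow> (\<Prod>y\<leftarrow>xs. f y) = (\<Prod>y\<leftarrow>ys. (f y :: 'a :: comm_monoid_mult))"
  by (metis mset_map prod_mset_prod_list)

lemma list_sum_perm: "mset xs = mset ys \<Longrightarrow> (\<Sum>y\<leftarrow>xs. f y) = (\<Sum>y\<leftarrow>ys. (f y :: 'a :: comm_monoid_add))"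
  by (metis mset_map sum_mset_sum_list)

lemma eigs_spec:
  fixes A :: "real mat"
  assumes A: "A \<in> carrier_mat n n" and sym: "transpose_mat A = A"
  shows "length (eigs A) = n \<and> sorted_wrt (\<ge>) (eigs A) \<and>
     (\<Sum>u<n. \<Sum>v<n. (A $$ (u, v))^2) = (\<Sum>e\<leftarrow>eigs A. e^2) \<and>
     (\<forall>\<mu>. (\<forall>e\<in>set (eigs A). e \<le> \<mu>) \<longrightarrow> (\<forall>x\<in>carrier_vec n. x \<bullet> (A *\<^sub>v x) \<le> \<mu> * (x \<bullet> x)))"
proof -
  obtain es where es: "length es = n" "char_poly A = (\<Prod>e\<leftarrow>es. [:- e, 1:])"
     "(\<Sum>u<n. \<Sum>v<n. (A $$ (u, v))^2) = (\<Sum>e\<leftarrow>es. e^2)"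
     "\<forall>\<mu>. (\<forall>e\<in>set es. e \<le> \<mu>) \<longrightarrow> (\<forall>x\<in>carrier_vec n. x \<bullet> (A *\<^sub>v x) \<le> \<mu> * (x \<bullet> x))"
    using spectral[OF A sym] by blast
  define xs where "xs = rev (sort es)"
  have mx: "mset xs = mset es" unfolding xs_def by simp
  have sx: "sorted_wrt (\<ge>) xs" unfolding xs_def by (simp add: sorted_wrt_rev)
  have P: "length xs = dim_row A \<and> sorted_wrt (\<ge>) xs \<and> char_poly A = (\<Prod>e\<leftarrow>xs. [:- e, 1:])"
    using A es(1,2) mx sx list_prod_perm[OF mx, of "\<lambda>e. [:- e, 1:]"] by (auto simp: xs_def)
  have "eigs A = xs" unfolding eigs_def
  proof (rule the_equality)
    show "\<And>ys. length ys = dim_row A \<and> sorted_wrt (\<ge>) ys \<and> char_poly A = (\<Prod>x\<leftarrow>ys. [:- x, 1:]) \<Longrightarrow> ys = xs"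
      using P linear_factors_unique by metis
  qed (use P in auto)
  moreover have "set xs = set es" using mx by (metis set_mset_mset)
  ultimately show ?thesis using P A es(3,4) list_sum_perm[OF mx, of "\<lambda>e. e^2"] by auto
qed

lemma arith_core:
  fixes s a b X Y N :: real and i q :: nat
  assumes i: "i > 0" and q: "q > 0" and N: "N \<ge> 0"
    and main: "s^2 + i * X^2 + q * Y^2 \<le> N * s"
    and aX: "a \<le> X" and bY: "- b \<le> Y" and X: "X \<ge> 0" and Y: "Y \<ge> 0"
  shows "a - b \<le> N / 2 * sqrt (real (i + q) / real (i * q))"
proof -
  define c where "c = real (i + q) / real (i * q)"
  have c: "c = 1 / i + 1 / q" unfolding c_def using i q by (simp add: field_simps)
  have P: "i * X^2 + q * Y^2 \<le> N^2 / 4"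
  proof -
    have "0 \<le> (N / 2 - s)^2" by simp
    thus ?thesis using main by (simp add: power2_eq_square algebra_simps)
  qed
  have CS: "(X + Y)^2 \<le> (i * X^2 + q * Y^2) * c"
  proof -
    have "(i * X^2 + q * Y^2) * c - (X + Y)^2 = (i * X - q * Y)^2 / (i * q)"
      unfolding c using i q by (simp add: field_simps power2_eq_square)
    moreover have "(i * X - q * Y)^2 / (i * q) \<ge> 0" by simp
    ultimately show ?thesis by linarith
  qed
  have c0: "c \<ge> 0" unfolding c_def by simp
  have "(X + Y)^2 \<le> N^2 / 4 * c" using CS P c0 by (meson mult_right_mono order_trans)
  hence "sqrt ((X + Y)^2) \<le> sqrt (N^2 / 4 * c)" by (rule real_sqrt_le_mono)
  also have "sqrt (N^2 / 4 * c) = N / 2 * sqrt c"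
  proof -
    have "N^2 / 4 = (N / 2)^2" by (simp add: power2_eq_square)
    thus ?thesis using N by (simp add: real_sqrt_mult)
  qed
  finally have "X + Y \<le> N / 2 * sqrt c" using X Y by simp
  thus ?thesis using aX bY unfolding c_def by linarith
qed

lemma sorted_nth_ge:
  fixes xs :: "real list"
  assumes "sorted_wrt (\<ge>) xs" "k \<le> l" "l < length xs"
  shows "xs ! l \<le> xs ! k"
  using assms by (cases "k = l") (auto simp: sorted_wrt_iff_nth_less)

lemma eig_bound:
  fixes A :: "real mat"
  assumes i1: "1 \<le> i" and iN: "i \<le> n - 1" and jN: "j \<le> n - 1" and G: "loop_graph_adj n A"
  shows "eig A (i + 1) - eig A (n - j) \<le> real n / 2 * sqrt (real (i + j + 1) / real (i * (j + 1)))"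
proof -
  have A: "A \<in> carrier_mat n n" and sym: "transpose_mat A = A"
    and A01: "\<And>u v. u < n \<Longrightarrow> v < n \<Longrightarrow> A $$ (u, v) = 0 \<or> A $$ (u, v) = 1"
    using G unfolding loop_graph_adj_def by auto
  have n: "n \<ge> 2" using i1 iN by auto
  define xs where "xs = eigs A"
  have len: "length xs = n" and sx: "sorted_wrt (\<ge>) xs"
    and sq: "(\<Sum>u<n. \<Sum>v<n. (A $$ (u, v))^2) = (\<Sum>e\<leftarrow>xs. e^2)"
    and ray: "\<And>\<mu>. (\<forall>e\<in>set xs. e \<le> \<mu>) \<Longrightarrow> (\<forall>x\<in>carrier_vec n. x \<bullet> (A *\<^sub>v x) \<le> \<mu> * (x \<bullet> x))"
    using eigs_spec[OF A sym] unfolding xs_def by auto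
  define s where "s = xs ! 0"
  have le_s: "\<forall>e\<in>set xs. e \<le> s"
    unfolding s_def using sx len n by (auto simp: in_set_conv_nth intro: sorted_nth_ge)
  define E where "E = (\<Sum>u<n. \<Sum>v<n. A $$ (u, v))"
  have sqE: "(\<Sum>k<n. (xs ! k)^2) = E"
  proof -
    have "(\<Sum>u<n. \<Sum>v<n. (A $$ (u, v))^2) = E" unfolding E_def
      by (intro sum.cong refl) (use A01 in \<open>auto simp: power2_eq_square\<close>)
    moreover have "(\<Sum>e\<leftarrow>xs. e^2) = (\<Sum>k<n. (xs ! k)^2)"
      using len by (simp add: sum_list_sum_nth atLeast0LessThan)
    ultimately show ?thesis using sq by simp
  qed
  define one where "one = vec n (\<lambda>_. 1 :: real)"
  have one: "one \<in> carrier_vec n" unfolding one_def by simp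
  have "one \<bullet> (A *\<^sub>v one) = E" using qform[OF A one] unfolding E_def one_def by simp
  moreover have "one \<bullet> one = real n" unfolding one_def by (simp add: scalar_prod_def)
  ultimately have En: "E \<le> s * real n" using ray[OF le_s] one by auto
  have eigi: "eig A (i + 1) = xs ! i" unfolding eig_def xs_def by simp
  have eigj: "eig A (n - j) = xs ! (n - j - 1)" unfolding eig_def xs_def by (simp add: diff_commute)
  show ?thesis
  proof (cases "n - j - 1 \<le> i")
    case True
    hence "xs ! i \<le> xs ! (n - j - 1)" using sorted_nth_ge[OF sx True] len iN n by simp
    moreover have "0 \<le> real n / 2 * sqrt (real (i + j + 1) / real (i * (j + 1)))" by simp
    ultimately show ?thesis unfolding eigi eigj by linarith
  next
    case False
    define a where "a = xs ! i"
    define b where "b = xs ! (n - j - 1)"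
    define X where "X = max a 0"
    define Y where "Y = max (- b) 0"
    have X1: "k \<in> {1..i} \<Longrightarrow> X^2 \<le> (xs ! k)^2" for k
    proof -
      assume k: "k \<in> {1..i}"
      have "a \<le> xs ! k" unfolding a_def using sorted_nth_ge[OF sx, of k i] k len iN n by auto
      thus ?thesis unfolding X_def by (cases "a \<ge> 0") (auto intro: power_mono)
    qed
    have Y1: "k \<in> {n - j - 1..<n} \<Longrightarrow> Y^2 \<le> (xs ! k)^2" for k
    proof -
      assume k: "k \<in> {n - j - 1..<n}"
      have "xs ! k \<le> b" unfolding b_def using sorted_nth_ge[OF sx, of "n - j - 1" k] k len by auto
      hence "- b \<le> - xs ! k" by simp
      have "Y^2 \<le> (- xs ! k)^2"
      proof (cases "- b \<ge> 0")
        case True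
        hence "Y \<le> - xs ! k" "0 \<le> Y" unfolding Y_def using \<open>- b \<le> - xs ! k\<close> by auto
        thus ?thesis by (intro power_mono)
      next
        case False
        thus ?thesis unfolding Y_def by simp
      qed
      thus ?thesis by simp
    qed
    have dis1: "{0::nat} \<inter> {1..i} = {}" by auto
    have dis2: "({0} \<union> {1..i}) \<inter> {n - j - 1..<n} = {}" using False by auto
    have sub: "{0} \<union> {1..i} \<union> {n - j - 1..<n} \<subseteq> {..<n}" using iN n by auto
    have "(\<Sum>k\<in>{0} \<union> {1..i} \<union> {n - j - 1..<n}. (xs ! k)^2) \<le> (\<Sum>k<n. (xs ! k)^2)"
      by (rule sum_mono2[OF _ sub]) auto
    also have "(\<Sum>k\<in>{0} \<union> {1..i} \<union> {n - j - 1..<n}. (xs ! k)^2)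
       = s^2 + (\<Sum>k\<in>{1..i}. (xs ! k)^2) + (\<Sum>k\<in>{n - j - 1..<n}. (xs ! k)^2)"
      by (subst sum.union_disjoint[OF _ _ dis2], simp, simp,
          subst sum.union_disjoint[OF _ _ dis1]) (auto simp: s_def)
    finally have tot: "s^2 + (\<Sum>k\<in>{1..i}. (xs ! k)^2) + (\<Sum>k\<in>{n - j - 1..<n}. (xs ! k)^2) \<le> E"
      using sqE by simp
    have "real i * X^2 \<le> (\<Sum>k\<in>{1..i}. (xs ! k)^2)"
      using sum_mono[of "{1..i}" "\<lambda>_. X^2" "\<lambda>k. (xs ! k)^2"] X1 by simp
    moreover have "real (j + 1) * Y^2 \<le> (\<Sum>k\<in>{n - j - 1..<n}. (xs ! k)^2)"
    proof -
      have "card {n - j - 1..<n} = j + 1" using jN n by simp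
      thus ?thesis using sum_mono[of "{n - j - 1..<n}" "\<lambda>_. Y^2" "\<lambda>k. (xs ! k)^2"] Y1 by simp
    qed
    ultimately have main: "s^2 + real i * X^2 + real (j + 1) * Y^2 \<le> real n * s"
      using tot En by (simp add: mult.commute)
    have "a - b \<le> real n / 2 * sqrt (real (i + (j + 1)) / real (i * (j + 1)))"
      by (rule arith_core[OF _ _ _ main]) (use i1 in \<open>auto simp: X_def Y_def\<close>)
    thus ?thesis unfolding eigi eigj a_def b_def by (simp add: add.assoc)
  qed
qed

lemma simple_graphs_finite: "finite {A. simple_graph_adj m A}"
proof -
  let ?F = "(\<lambda>f. mat m m (\<lambda>(u, v). f u v)) ` (PiE {..<m} (\<lambda>_. PiE {..<m} (\<lambda>_. {0 :: real, 1})))"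
  have "{A. simple_graph_adj m A} \<subseteq> ?F"
  proof
    fix A assume "A \<in> {A. simple_graph_adj m A}"
    hence A: "A \<in> carrier_mat m m" and A01: "\<And>u v. u < m \<Longrightarrow> v < m \<Longrightarrow> A $$ (u, v) = 0 \<or> A $$ (u, v) = 1"
      unfolding simple_graph_adj_def loop_graph_adj_def by auto
    define f where "f = (\<lambda>u\<in>{..<m}. \<lambda>v\<in>{..<m}. A $$ (u, v))"
    have "f \<in> PiE {..<m} (\<lambda>_. PiE {..<m} (\<lambda>_. {0 :: real, 1}))"
      unfolding f_def using A01 by auto
    moreover have "A = mat m m (\<lambda>(u, v). f u v)"
      using A unfolding f_def by (intro eq_matI) auto
    ultimately show "A \<in> ?F" by blast
  qed
  moreover have "finite ?F" by (intro finite_imageI finite_PiE) auto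
  ultimately show ?thesis by (rule finite_subset)
qed

lemma spread_n_bound:
  assumes "1 \<le> i" "i \<le> m - 1" "j \<le> m - 1"
  shows "spread_n i j m \<le> real m / 2 * sqrt (real (i + j + 1) / real (i * (j + 1)))"
proof -
  have eq: "{spread_graph i j m A | A. simple_graph_adj m A} = spread_graph i j m ` {A. simple_graph_adj m A}"
    by auto
  have "simple_graph_adj m (0\<^sub>m m m)" unfolding simple_graph_adj_def loop_graph_adj_def by auto
  hence ne: "{A. simple_graph_adj m A} \<noteq> {}" by auto
  have "spread_n i j m \<in> spread_graph i j m ` {A. simple_graph_adj m A}"
    unfolding spread_n_def eq using simple_graphs_finite ne by (intro Max_in) auto
  then obtain A where "simple_graph_adj m A" and sp: "spread_n i j m = spread_graph i j m A" by auto
  hence "loop_graph_adj m A" unfolding simple_graph_adj_def by auto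
  from eig_bound[OF assms this] show ?thesis unfolding sp spread_graph_def .
qed

theorem theorem1p1:
  fixes n i j :: nat and A :: "real mat"
  assumes "n \<ge> 2" and "1 \<le> i" and "i \<le> n - 1" and "j \<le> n - 1"
    and "loop_graph_adj n A"
  shows "eig A (i + 1) - eig A (n - j)
           \<le> real n / 2 * sqrt (real (i + j + 1) / real (i * (j + 1))) \<and>
         (\<forall>L. ((\<lambda>m. spread_n i j m / real m) \<longlonglongrightarrow> L) \<longrightarrow>
           L \<le> 1 / 2 * sqrt (real (i + j + 1) / real (i * (j + 1))))"
proof (intro conjI allI impI)
  show "eig A (i + 1) - eig A (n - j) \<le> real n / 2 * sqrt (real (i + j + 1) / real (i * (j + 1)))"
    using eig_bound assms by blast
  fix L assume lim: "(\<lambda>m. spread_n i j m / real m) \<longlonglongrightarrow> L"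
  show "L \<le> 1 / 2 * sqrt (real (i + j + 1) / real (i * (j + 1)))"
  proof (rule LIMSEQ_le_const2[OF lim], intro exI[of _ "i + j + 1"] allI impI)
    fix m assume m: "i + j + 1 \<le> m"
    have "spread_n i j m \<le> real m / 2 * sqrt (real (i + j + 1) / real (i * (j + 1)))"
      using spread_n_bound[of i m j] m assms(2) by auto
    moreover have "real m > 0" using m by simp
    ultimately show "spread_n i j m / real m \<le> 1 / 2 * sqrt (real (i + j + 1) / real (i * (j + 1)))"
      by (simp add: divide_le_eq mult.commute)
  qed
qed

end
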